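(* Let $\Gamma\subset SU(2)$ be finite and $\mathbb{V}=(\mathbb{C}^2\setminus\{0\})/\Gamma$ with its standard complex structure, flat metric $g_0$ and Levi-Civita connection $\nabla_0$, and let $S^1=\{\lambda\in\mathbb{C}:|\lambda|=1\}$ act on $\mathbb{V}$ by scalar multiplication. Let $\gamma\in\Omega^1(\mathbb{V})$ be $S^1$-invariant, with $d\gamma$ of type $(1,1)$ and $|\nabla_0^k\gamma|_{g_0}=O(r^{-3-k})$ as $r\to\infty$ for all $k\ge0$, where $r=\|\cdot\|$. Then there is an $S^1$-invariant $\psi\in C^\infty(\mathbb{V})$ such that $d\gamma=\sqrt{-1}\partial\bar\partial\psi$ and $|\nabla_0^k\psi|_{g_0}=O(r^{-2-k})$ as $r\to\infty$ for all $k\ge0$. *)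

theory Defs
  imports "HOL-Analysis.Analysis" "HOL-Library.Landau_Symbols"
begin

text \<open>Points of C^2 are vectors of type complex^2 (a real normed vector space of real
dimension 4). All derivatives are real (Frechet) derivatives.\<close>

definition conj_transpose :: "complex^2^2 \<Rightarrow> complex^2^2" where
  "conj_transpose A = (\<chi> i j. cnj (A $ j $ i))"

definition SU2 :: "(complex^2^2) set" where
  "SU2 = {A. A ** conj_transpose A = mat 1 \<and> det A = 1}"

definition dirD :: "('a::real_normed_vector \<Rightarrow> 'b::real_normed_vector) \<Rightarrow> 'a \<Rightarrow> 'a \<Rightarrow> 'b" where
  "dirD f v x = frechet_derivative f (at x) v"

fun pd :: "'a::real_normed_vector list \<Rightarrow> ('a \<Rightarrow> 'b::real_normed_vector) \<Rightarrow> 'a \<Rightarrow> 'b" where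
  "pd [] f = f"
| "pd (v # vs) f = dirD (pd vs f) v"

definition smooth_on :: "'a::real_normed_vector set \<Rightarrow> ('a \<Rightarrow> 'b::real_normed_vector) \<Rightarrow> bool" where
  "smooth_on U f \<longleftrightarrow> (\<forall>vs. \<forall>x\<in>U. pd vs f differentiable (at x))"

text \<open>A smooth real 1-form on U: at each point a real-linear functional,
  with smooth coefficients (gamma x v = gamma_x(v)).\<close>
definition smooth_1form_on :: "'a::real_normed_vector set \<Rightarrow> ('a \<Rightarrow> 'a \<Rightarrow> 'b::real_normed_vector) \<Rightarrow> bool" where
  "smooth_1form_on U \<gamma> \<longleftrightarrow> (\<forall>x\<in>U. linear (\<gamma> x)) \<and> (\<forall>v. smooth_on U (\<lambda>x. \<gamma> x v))"

definition extd :: "('a::real_normed_vector \<Rightarrow> 'a \<Rightarrow> 'b::real_normed_vector) \<Rightarrow> 'a \<Rightarrow> 'a \<Rightarrow> 'a \<Rightarrow> 'b" where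
  "extd \<alpha> x u v = dirD (\<lambda>y. \<alpha> y v) u x - dirD (\<lambda>y. \<alpha> y u) v x"

definition Jmul :: "complex^2 \<Rightarrow> complex^2" where
  "Jmul v = \<i> *s v"

text \<open>A real 2-form omega on C^2 is of type (1,1) iff omega(Ju,Jv) = omega(u,v).\<close>
definition type11_on :: "(complex^2) set \<Rightarrow> (complex^2 \<Rightarrow> complex^2 \<Rightarrow> complex^2 \<Rightarrow> real) \<Rightarrow> bool" where
  "type11_on U \<omega> \<longleftrightarrow> (\<forall>x\<in>U. \<forall>u v. \<omega> x (Jmul u) (Jmul v) = \<omega> x u v)"

definition dbar :: "(complex^2 \<Rightarrow> real) \<Rightarrow> complex^2 \<Rightarrow> complex^2 \<Rightarrow> complex" where
  "dbar \<psi> x v = (complex_of_real (dirD \<psi> v x) + \<i> * complex_of_real (dirD \<psi> (Jmul v) x)) / 2"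

text \<open>sqrt(-1) d dbar psi = sqrt(-1) (partial dbar psi), as a (complex-valued, in fact real) 2-form.\<close>
definition i_ddbar :: "(complex^2 \<Rightarrow> real) \<Rightarrow> complex^2 \<Rightarrow> complex^2 \<Rightarrow> complex^2 \<Rightarrow> complex" where
  "i_ddbar \<psi> x u v = \<i> * extd (dbar \<psi>) x u v"

end

theory Submission
  imports Defs
begin

lemma dirD_eq_open:
  assumes "open U" "x \<in> U" "\<And>y. y \<in> U \<Longrightarrow> f y = g y"
  shows "dirD f v x = dirD g v x"
proof -
  have "\<And>D. (f has_derivative D) (at x) \<longleftrightarrow> (g has_derivative D) (at x)"
    using has_derivative_transform_within_open[OF _ assms(1,2)] assms(3) by metis
  then have "frechet_derivative f (at x) = frechet_derivative g (at x)"
    unfolding frechet_derivative_def by simp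
  then show ?thesis unfolding dirD_def by simp
qed

lemma diff_eq_open:
  assumes "open U" "x \<in> U" "\<And>y. y \<in> U \<Longrightarrow> f y = g y" "f differentiable at x"
  shows "g differentiable at x"
  using has_derivative_transform_within_open[OF _ assms(1,2)] assms(3,4)
  unfolding differentiable_def by metis

lemma pd_eq_open:
  assumes "open U" "\<And>y. y \<in> U \<Longrightarrow> f y = g y" "x \<in> U"
  shows "pd vs f x = pd vs g x"
  using assms(3)
proof (induction vs arbitrary: x)
  case Nil
  then show ?case using assms by simp
next
  case (Cons v vs)
  show ?case using dirD_eq_open[OF assms(1) Cons.prems Cons.IH] by simp
qed

lemma pd_append: "pd (vs @ ws) f = pd vs (pd ws f)"
  by (induction vs) auto

lemma has_derivative_dirD:
  "f differentiable at x \<Longrightarrow> (f has_derivative (\<lambda>v. dirD f v x)) (at x)"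
  unfolding dirD_def using frechet_derivative_works by (metis eta_contract_eq)

lemma dirD_at: "(f has_derivative f') (at x) \<Longrightarrow> dirD f v x = f' v"
  unfolding dirD_def using frechet_derivative_at by metis

lemma linear_dirD: "f differentiable at x \<Longrightarrow> linear (\<lambda>v. dirD f v x)"
  using has_derivative_dirD has_derivative_linear by blast

lemma dirD_lincomb:
  fixes f g :: "'a::real_normed_vector \<Rightarrow> real"
  assumes "f differentiable at x" "g differentiable at x"
  shows "dirD (\<lambda>y. a * f y + g y) v x = a * dirD f v x + dirD g v x"
    and "(\<lambda>y. a * f y + g y) differentiable at x"
proof -
  have "((\<lambda>y. a * f y + g y) has_derivative (\<lambda>v. a * dirD f v x + dirD g v x)) (at x)"
    using has_derivative_dirD[OF assms(1)] has_derivative_dirD[OF assms(2)]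
    by (intro has_derivative_add has_derivative_mult_right)
  then show "dirD (\<lambda>y. a * f y + g y) v x = a * dirD f v x + dirD g v x"
    and "(\<lambda>y. a * f y + g y) differentiable at x"
    using dirD_at differentiableI by blast+
qed

lemma pd_lincomb:
  fixes f g :: "'a::real_normed_vector \<Rightarrow> real"
  assumes U: "open U" and sf: "smooth_on U f" and sg: "smooth_on U g" and x: "x \<in> U"
  shows "pd vs (\<lambda>y. a * f y + g y) x = a * pd vs f x + pd vs g x"
  using x
proof (induction vs arbitrary: x)
  case Nil
  then show ?case by simp
next
  case (Cons v vs)
  have "pd (v # vs) (\<lambda>y. a * f y + g y) x = dirD (\<lambda>y. a * pd vs f y + pd vs g y) v x"
    using dirD_eq_open[OF U Cons.prems Cons.IH] by simp
  also have "\<dots> = a * dirD (pd vs f) v x + dirD (pd vs g) v x"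
  proof (rule dirD_lincomb(1))
    show "pd vs f differentiable at x" using sf Cons.prems unfolding smooth_on_def by blast
    show "pd vs g differentiable at x" using sg Cons.prems unfolding smooth_on_def by blast
  qed
  finally show ?case by simp
qed

lemma smooth_lincomb:
  fixes f g :: "'a::real_normed_vector \<Rightarrow> real"
  assumes U: "open U" and sf: "smooth_on U f" and sg: "smooth_on U g"
  shows "smooth_on U (\<lambda>y. a * f y + g y)"
  unfolding smooth_on_def
proof (intro allI ballI)
  fix vs x assume x: "x \<in> U"
  have "(\<lambda>y. a * pd vs f y + pd vs g y) differentiable at x"
  proof (rule dirD_lincomb(2))
    show "pd vs f differentiable at x" using sf x unfolding smooth_on_def by blast
    show "pd vs g differentiable at x" using sg x unfolding smooth_on_def by blast
  qed
  then show "pd vs (\<lambda>y. a * f y + g y) differentiable at x"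
    using diff_eq_open[OF U x, of "\<lambda>y. a * pd vs f y + pd vs g y"] pd_lincomb[OF U sf sg, of _ vs a]
    by simp
qed

lemma smooth_pd: "smooth_on U f \<Longrightarrow> smooth_on U (pd vs f)"
  unfolding smooth_on_def by (simp add: pd_append[symmetric])

lemma linear_expand:
  fixes L :: "'a::euclidean_space \<Rightarrow> real"
  assumes "linear L"
  shows "L w = (\<Sum>b\<in>Basis. (w \<bullet> b) * L b)"
proof -
  have "L w = L (\<Sum>b\<in>Basis. (w \<bullet> b) *\<^sub>R b)" by (simp add: euclidean_representation)
  also have "\<dots> = (\<Sum>b\<in>Basis. (w \<bullet> b) * L b)"
    using assms by (simp add: linear_sum linear_scale)
  finally show ?thesis .
qed

lemma dirD_linear_arg:
  fixes F :: "'a::real_normed_vector \<Rightarrow> 'b::real_normed_vector \<Rightarrow> real"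
  assumes U: "open U" "y \<in> U" and lin: "\<And>z. z \<in> U \<Longrightarrow> linear (F z)"
    and dif: "\<And>w. (\<lambda>z. F z w) differentiable at y"
  shows "linear (\<lambda>w. dirD (\<lambda>z. F z w) u y)"
proof (rule linearI)
  fix w1 w2
  have "dirD (\<lambda>z. F z (w1 + w2)) u y = dirD (\<lambda>z. 1 * F z w1 + F z w2) u y"
    by (rule dirD_eq_open[OF U]) (simp add: lin linear_add)
  also have "\<dots> = dirD (\<lambda>z. F z w1) u y + dirD (\<lambda>z. F z w2) u y"
    using dirD_lincomb(1)[OF dif[of w1] dif[of w2], of 1 u] by simp
  finally show "dirD (\<lambda>z. F z (w1 + w2)) u y = dirD (\<lambda>z. F z w1) u y + dirD (\<lambda>z. F z w2) u y" .
next
  fix c :: real and w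
  have "dirD (\<lambda>z. F z (c *\<^sub>R w)) u y = dirD (\<lambda>z. c * F z w + (\<lambda>_. 0) z) u y"
    by (rule dirD_eq_open[OF U]) (simp add: lin linear_scale)
  also have "\<dots> = c * dirD (\<lambda>z. F z w) u y"
    using dirD_lincomb(1)[OF dif[of w] differentiable_const[of 0], of c u] by (simp add: dirD_def)
  finally show "dirD (\<lambda>z. F z (c *\<^sub>R w)) u y = c *\<^sub>R dirD (\<lambda>z. F z w) u y" by simp
qed

lemma linchain:
  fixes F :: "'a::euclidean_space \<Rightarrow> 'a \<Rightarrow> real" and p q :: "'b::real_normed_vector \<Rightarrow> 'a"
  assumes U: "open U" "p x \<in> U" and lin: "\<And>z. z \<in> U \<Longrightarrow> linear (F z)"
    and dif: "\<And>w. (\<lambda>z. F z w) differentiable at (p x)"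
    and dp: "(p has_derivative p') (at x)" and dq: "(q has_derivative q') (at x)"
  shows "((\<lambda>t. F (p t) (q t)) has_derivative
           (\<lambda>h. dirD (\<lambda>z. F z (q x)) (p' h) (p x) + F (p x) (q' h))) (at x)"
proof -
  have cont: "isCont p x" using dp by (rule has_derivative_continuous)
  obtain e where e: "e > 0" "ball (p x) e \<subseteq> U"
    using U open_contains_ball by blast
  obtain d where d0: "d > 0" and dd: "\<And>t. dist t x < d \<Longrightarrow> dist (p t) (p x) < e"
    using cont e(1) unfolding continuous_at_eps_delta by blast
  have d: "d > 0" "\<And>t. dist t x < d \<Longrightarrow> p t \<in> U"
    using d0 dd e(2) by (auto simp: dist_commute subset_iff)
  have Fb: "((\<lambda>t. F (p t) b) has_derivative (\<lambda>h. dirD (\<lambda>z. F z b) (p' h) (p x))) (at x)" for b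
    using has_derivative_compose[OF dp has_derivative_dirD[OF dif[of b]]] by simp
  have D: "((\<lambda>t. \<Sum>b\<in>Basis. (q t \<bullet> b) * F (p t) b) has_derivative
     (\<lambda>h. \<Sum>b\<in>Basis. (q x \<bullet> b) * dirD (\<lambda>z. F z b) (p' h) (p x) + (q' h \<bullet> b) * F (p x) b)) (at x)"
    by (rule has_derivative_sum, rule has_derivative_mult[OF has_derivative_inner_left[OF dq] Fb])
  have linD: "linear (\<lambda>w. dirD (\<lambda>z. F z w) u (p x))" for u
    using dirD_linear_arg[OF U lin dif] .
  have eqD: "(\<lambda>h. \<Sum>b\<in>Basis. (q x \<bullet> b) * dirD (\<lambda>z. F z b) (p' h) (p x) + (q' h \<bullet> b) * F (p x) b)
       = (\<lambda>h. dirD (\<lambda>z. F z (q x)) (p' h) (p x) + F (p x) (q' h))"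
  proof
    fix h
    show "(\<Sum>b\<in>Basis. (q x \<bullet> b) * dirD (\<lambda>z. F z b) (p' h) (p x) + (q' h \<bullet> b) * F (p x) b)
       = dirD (\<lambda>z. F z (q x)) (p' h) (p x) + F (p x) (q' h)"
      using linear_expand[OF linD[of "p' h"], of "q x"] linear_expand[OF lin[OF U(2)], of "q' h"]
      by (simp add: sum.distrib)
  qed
  show ?thesis
  proof (rule has_derivative_transform_within[OF D[unfolded eqD] d(1)])
    fix t assume "dist t x < d"
    then have "p t \<in> U" using d by blast
    then show "(\<Sum>b\<in>Basis. (q t \<bullet> b) * F (p t) b) = F (p t) (q t)"
      using linear_expand[OF lin, of "p t" "q t"] by simp
  qed simp
qed

definition bnd :: "real \<Rightarrow> ('a::real_normed_vector \<Rightarrow> real) \<Rightarrow> bool" where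
  "bnd e f \<longleftrightarrow> (\<exists>C R. \<forall>y. R \<le> norm y \<longrightarrow> \<bar>f y\<bar> \<le> C * norm y powr e)"

lemma bndE:
  assumes "bnd e f"
  obtains C R where "C \<ge> 0" "R > 0" "\<And>y. R \<le> norm y \<Longrightarrow> \<bar>f y\<bar> \<le> C * norm y powr e"
proof -
  obtain C R where h: "\<And>y. R \<le> norm y \<Longrightarrow> \<bar>f y\<bar> \<le> C * norm y powr e"
    using assms unfolding bnd_def by blast
  have "\<bar>f y\<bar> \<le> max C 0 * norm y powr e" if "max R 1 \<le> norm y" for y
  proof -
    have "\<bar>f y\<bar> \<le> C * norm y powr e" using h that by simp
    also have "\<dots> \<le> max C 0 * norm y powr e" by (intro mult_right_mono) auto
    finally show ?thesis .
  qed
  then show ?thesis using that[of "max C 0" "max R 1"] by simp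
qed

lemma bndI: "(\<And>y. R \<le> norm y \<Longrightarrow> \<bar>f y\<bar> \<le> C * norm y powr e) \<Longrightarrow> bnd e f"
  unfolding bnd_def by blast

lemma bnd_bigo: "bnd e f \<longleftrightarrow> f \<in> O[at_infinity](\<lambda>x. norm x powr e)"
proof
  assume "bnd e f"
  then obtain C R where h: "\<And>y. R \<le> norm y \<Longrightarrow> \<bar>f y\<bar> \<le> C * norm y powr e"
    unfolding bnd_def by blast
  show "f \<in> O[at_infinity](\<lambda>x. norm x powr e)"
  proof (rule bigoI)
    show "\<forall>\<^sub>F x in at_infinity. norm (f x) \<le> C * norm (norm x powr e)"
      unfolding eventually_at_infinity using h by auto
  qed
next
  assume "f \<in> O[at_infinity](\<lambda>x. norm x powr e)"
  then obtain c where "\<forall>\<^sub>F x in at_infinity. norm (f x) \<le> c * norm (norm x powr e)"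
    by (elim landau_o.bigE) auto
  then obtain b where "\<And>x. b \<le> norm x \<Longrightarrow> norm (f x) \<le> c * norm (norm x powr e)"
    unfolding eventually_at_infinity by blast
  then show "bnd e f" unfolding bnd_def by (intro exI[of _ c] exI[of _ b]) auto
qed

lemma bnd_lincomb:
  assumes "bnd e f" "bnd e g"
  shows "bnd e (\<lambda>y. a * f y + g y)"
proof -
  obtain C1 R1 where 1: "C1 \<ge> 0" "R1 > 0" "\<And>y. R1 \<le> norm y \<Longrightarrow> \<bar>f y\<bar> \<le> C1 * norm y powr e"
    using bndE[OF assms(1)] by blast
  obtain C2 R2 where 2: "C2 \<ge> 0" "R2 > 0" "\<And>y. R2 \<le> norm y \<Longrightarrow> \<bar>g y\<bar> \<le> C2 * norm y powr e"
    using bndE[OF assms(2)] by blast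
  show ?thesis
  proof (rule bndI[of "max R1 R2" _ "\<bar>a\<bar> * C1 + C2"])
    fix y :: 'a assume y: "max R1 R2 \<le> norm y"
    have "\<bar>a * f y + g y\<bar> \<le> \<bar>a\<bar> * \<bar>f y\<bar> + \<bar>g y\<bar>" by (simp add: abs_mult abs_triangle_ineq order_trans[OF abs_triangle_ineq])
    also have "\<dots> \<le> \<bar>a\<bar> * (C1 * norm y powr e) + C2 * norm y powr e"
      using 1(3)[of y] 2(3)[of y] y 1(1) by (intro add_mono mult_left_mono) auto
    finally show "\<bar>a * f y + g y\<bar> \<le> (\<bar>a\<bar> * C1 + C2) * norm y powr e" by (simp add: algebra_simps)
  qed
qed

lemma bnd_zero: "bnd e (\<lambda>y. 0)"
  by (rule bndI[of 0 _ 0]) simp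

lemma bnd_scale: "bnd e f \<Longrightarrow> bnd e (\<lambda>y. a * f y)"
  using bnd_lincomb[OF _ bnd_zero, of e f a] by simp

lemma bnd_sum:
  assumes "\<And>j. j \<in> S \<Longrightarrow> bnd e (f j)"
  shows "bnd e (\<lambda>y. \<Sum>j\<in>S. f j y)"
  using assms
proof (induction S rule: infinite_finite_induct)
  case (infinite A)
  then show ?case by (simp add: bnd_zero)
next
  case empty
  then show ?case by (simp add: bnd_zero)
next
  case (insert x F)
  then show ?case using bnd_lincomb[of e "f x" "\<lambda>y. \<Sum>j\<in>F. f j y" 1] by simp
qed

lemma bnd_cong:
  assumes "bnd e f" "\<And>y. y \<noteq> 0 \<Longrightarrow> f y = g y"
  shows "bnd e g"
proof -
  obtain C R where h: "C \<ge> 0" "R > 0" "\<And>y. R \<le> norm y \<Longrightarrow> \<bar>f y\<bar> \<le> C * norm y powr e"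
    using bndE[OF assms(1)] by blast
  show ?thesis
  proof (rule bndI[of R _ C])
    fix y :: 'a assume "R \<le> norm y"
    then have "y \<noteq> 0" using h(2) by auto
    then show "\<bar>g y\<bar> \<le> C * norm y powr e" using h(3)[OF \<open>R \<le> norm y\<close>] assms(2)[of y] by simp
  qed
qed

lemma bnd_lin:
  fixes l :: "'a::real_normed_vector \<Rightarrow> real"
  assumes "bounded_linear l" "bnd e f"
  shows "bnd (e + 1) (\<lambda>y. l y * f y)"
proof -
  obtain K where K: "K > 0" "\<And>y. norm (l y) \<le> norm y * K"
    using bounded_linear.pos_bounded[OF assms(1)] by blast
  obtain C R where h: "C \<ge> 0" "R > 0" "\<And>y. R \<le> norm y \<Longrightarrow> \<bar>f y\<bar> \<le> C * norm y powr e"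
    using bndE[OF assms(2)] by blast
  show ?thesis
  proof (rule bndI[of R _ "K * C"])
    fix y :: 'a assume y: "R \<le> norm y"
    then have ny: "norm y > 0" using h(2) by linarith
    have "\<bar>l y * f y\<bar> = \<bar>l y\<bar> * \<bar>f y\<bar>" by (simp add: abs_mult)
    also have "\<dots> \<le> (norm y * K) * (C * norm y powr e)"
      using K(2)[of y] h(3)[OF y] by (intro mult_mono) auto
    also have "\<dots> = K * C * norm y powr (e + 1)" using ny by (simp add: powr_add mult_ac)
    finally show "\<bar>l y * f y\<bar> \<le> K * C * norm y powr (e + 1)" .
  qed
qed

definition decays :: "real \<Rightarrow> ('a::real_normed_vector \<Rightarrow> real) \<Rightarrow> bool" where
  "decays m f \<longleftrightarrow> smooth_on (-{0}) f \<and> (\<forall>vs. bnd (- m - real (length vs)) (pd vs f))"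

lemma open_punct: "open (-{0::'a::real_normed_vector})"
  by (simp add: open_Compl)

lemma decays_smooth: "decays m f \<Longrightarrow> smooth_on (-{0}) f"
  unfolding decays_def by blast

lemma decays_diff: "decays m f \<Longrightarrow> x \<noteq> 0 \<Longrightarrow> pd vs f differentiable at x"
  unfolding decays_def smooth_on_def by blast

lemma decays_bnd: "decays m f \<Longrightarrow> bnd (- m - real (length vs)) (pd vs f)"
  unfolding decays_def by blast

lemma decays_pd:
  assumes "decays m f" shows "decays (m + real (length vs)) (pd vs f)"
  unfolding decays_def
proof (intro conjI allI)
  show "smooth_on (-{0}) (pd vs f)" using smooth_pd decays_smooth[OF assms] .
  fix ws :: "'a list"
  show "bnd (- (m + real (length vs)) - real (length ws)) (pd ws (pd vs f))"
    using decays_bnd[OF assms, of "ws @ vs"] by (simp add: pd_append algebra_simps)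
qed

lemma decays_cong:
  assumes "decays m f" "\<And>y. y \<noteq> 0 \<Longrightarrow> f y = g y"
  shows "decays m g"
proof -
  have eq: "pd vs f y = pd vs g y" if "y \<noteq> 0" for vs y
  proof (rule pd_eq_open[OF open_punct])
    show "\<And>y. y \<in> - {0} \<Longrightarrow> f y = g y" using assms(2) by simp
    show "y \<in> - {0}" using that by simp
  qed
  show ?thesis unfolding decays_def smooth_on_def
  proof (intro conjI allI ballI)
    fix vs and x :: 'a assume x: "x \<in> -{0}"
    show "pd vs g differentiable at x"
    proof (rule diff_eq_open[OF open_punct x])
      show "\<And>y. y \<in> - {0} \<Longrightarrow> pd vs f y = pd vs g y" using eq by simp
      show "pd vs f differentiable at x" using decays_diff[OF assms(1)] x by simp
    qed
  next
    fix vs show "bnd (- m - real (length vs)) (pd vs g)"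
    proof (rule bnd_cong[OF decays_bnd[OF assms(1)]])
      show "\<And>y. y \<noteq> 0 \<Longrightarrow> pd vs f y = pd vs g y" using eq by simp
    qed
  qed
qed

lemma decays_lincomb:
  assumes "decays m f" "decays m g"
  shows "decays m (\<lambda>y. a * f y + g y)"
  unfolding decays_def
proof (intro conjI allI)
  show "smooth_on (-{0}) (\<lambda>y. a * f y + g y)"
    using smooth_lincomb[OF open_punct decays_smooth[OF assms(1)] decays_smooth[OF assms(2)]] .
  fix vs
  show "bnd (- m - real (length vs)) (pd vs (\<lambda>y. a * f y + g y))"
  proof (rule bnd_cong[OF bnd_lincomb[OF decays_bnd[OF assms(1)] decays_bnd[OF assms(2)]]])
    fix y :: 'a assume "y \<noteq> 0"
    then show "a * pd vs f y + pd vs g y = pd vs (\<lambda>y. a * f y + g y) y"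
      using pd_lincomb[OF open_punct decays_smooth[OF assms(1)] decays_smooth[OF assms(2)], of y vs a]
      by simp
  qed
qed

lemma decays_zero: "decays m (\<lambda>y. 0)"
proof -
  have "pd vs (\<lambda>y. 0::real) = (\<lambda>y. 0)" for vs :: "'a list"
    by (induction vs) (auto simp: dirD_def)
  then show ?thesis unfolding decays_def smooth_on_def by (simp add: bnd_zero)
qed

lemma decays_sum:
  assumes "\<And>j. j \<in> S \<Longrightarrow> decays m (f j)"
  shows "decays m (\<lambda>y. \<Sum>j\<in>S. f j y)"
  using assms
proof (induction S rule: infinite_finite_induct)
  case (infinite A)
  then show ?case by (simp add: decays_zero)
next
  case empty
  then show ?case by (simp add: decays_zero)
next
  case (insert x F)
  then show ?case using decays_lincomb[of m "f x" "\<lambda>y. \<Sum>j\<in>F. f j y" 1] by simp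
qed

definition rm :: "nat \<Rightarrow> 'a list \<Rightarrow> 'a list" where
  "rm j vs = take j vs @ drop (Suc j) vs"

lemma length_rm: "j < length vs \<Longrightarrow> length (rm j vs) = length vs - 1"
  unfolding rm_def by simp

lemma pd_lin_formula:
  fixes l :: "'a::real_normed_vector \<Rightarrow> real"
  assumes l: "bounded_linear l" and U: "open U" and sf: "smooth_on U f" 
  shows "x \<in> U \<Longrightarrow> pd vs (\<lambda>y. l y * f y) x = l x * pd vs f x + (\<Sum>j<length vs. l (vs ! j) * pd (rm j vs) f x)"
proof (induction vs arbitrary: x)
  case Nil
  then show ?case by simp
next
  case (Cons v vs)
  let ?R = "\<lambda>y. l y * pd vs f y + (\<Sum>j<length vs. l (vs ! j) * pd (rm j vs) f y)"
  have dif: "pd ws f differentiable at x" for ws using sf Cons.prems unfolding smooth_on_def by blast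
  have "(?R has_derivative (\<lambda>h. (l x * dirD (pd vs f) h x + l h * pd vs f x) +
          (\<Sum>j<length vs. l (vs ! j) * dirD (pd (rm j vs) f) h x))) (at x)"
    by (intro has_derivative_add has_derivative_mult has_derivative_sum has_derivative_mult_right
          bounded_linear.has_derivative[OF l] has_derivative_ident has_derivative_dirD dif)
  then have "dirD ?R v x = (l x * dirD (pd vs f) v x + l v * pd vs f x) +
          (\<Sum>j<length vs. l (vs ! j) * dirD (pd (rm j vs) f) v x)"
    by (rule dirD_at)
  moreover have "pd (v # vs) (\<lambda>y. l y * f y) x = dirD ?R v x"
    using dirD_eq_open[OF U Cons.prems Cons.IH] by simp
  moreover have "(\<Sum>j<length (v # vs). l ((v # vs) ! j) * pd (rm j (v # vs)) f x)
     = l v * pd vs f x + (\<Sum>j<length vs. l (vs ! j) * dirD (pd (rm j vs) f) v x)"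
    by (simp only: length_Cons sum.lessThan_Suc_shift) (simp add: rm_def)
  ultimately show ?case by simp
qed

lemma smooth_lin:
  fixes l :: "'a::real_normed_vector \<Rightarrow> real"
  assumes l: "bounded_linear l" and U: "open U" and sf: "smooth_on U f"
  shows "smooth_on U (\<lambda>y. l y * f y)"
  unfolding smooth_on_def
proof (intro allI ballI)
  fix vs x assume x: "x \<in> U"
  have dif: "pd ws f differentiable at x" for ws using sf x unfolding smooth_on_def by blast
  have "(\<lambda>y. l y * pd vs f y + (\<Sum>j<length vs. l (vs ! j) * pd (rm j vs) f y)) differentiable at x"
    using dif bounded_linear_imp_differentiable[OF l] by (intro differentiable_add differentiable_mult differentiable_sum differentiable_const) auto
  then show "pd vs (\<lambda>y. l y * f y) differentiable at x"
    using diff_eq_open[OF U x] pd_lin_formula[OF l U sf] by (metis (no_types, lifting))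
qed

lemma decays_lin:
  fixes l :: "'a::real_normed_vector \<Rightarrow> real"
  assumes l: "bounded_linear l" and d: "decays m f"
  shows "decays (m - 1) (\<lambda>y. l y * f y)"
  unfolding decays_def
proof (intro conjI allI)
  show "smooth_on (- {0}) (\<lambda>y. l y * f y)" using smooth_lin[OF l open_punct decays_smooth[OF d]] .
  fix vs :: "'a list"
  have b1: "bnd (- (m - 1) - real (length vs)) (\<lambda>y. l y * pd vs f y)"
    using bnd_lin[OF l decays_bnd[OF d, of vs]] by (simp add: algebra_simps)
  have b2: "bnd (- (m - 1) - real (length vs)) (pd (rm j vs) f)" if "j < length vs" for j
    using decays_bnd[OF d, of "rm j vs"] that by (simp add: length_rm of_nat_diff algebra_simps)
  have "bnd (- (m - 1) - real (length vs))
     (\<lambda>y. 1 * (l y * pd vs f y) + (\<Sum>j<length vs. l (vs ! j) * pd (rm j vs) f y))"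
    using b2 by (intro bnd_lincomb b1 bnd_sum bnd_scale) auto
  then show "bnd (- (m - 1) - real (length vs)) (pd vs (\<lambda>y. l y * f y))"
    using pd_lin_formula[OF l open_punct decays_smooth[OF d]] 
    by (elim bnd_cong) simp
qed

lemma line_deriv:
  fixes g :: "'a::real_normed_vector \<Rightarrow> real"
  assumes "g differentiable at (z + s *\<^sub>R u)"
  shows "((\<lambda>s. g (z + s *\<^sub>R u)) has_real_derivative dirD g u (z + s *\<^sub>R u)) (at s)"
proof -
  have l: "((\<lambda>s. z + s *\<^sub>R u) has_derivative (\<lambda>h. h *\<^sub>R u)) (at s)"
    by (intro derivative_eq_intros) auto
  have "((\<lambda>s. g (z + s *\<^sub>R u)) has_derivative (\<lambda>h. dirD g (h *\<^sub>R u) (z + s *\<^sub>R u))) (at s)"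
    using has_derivative_compose[OF l has_derivative_dirD[OF assms]] by simp
  moreover have "(\<lambda>h. dirD g (h *\<^sub>R u) (z + s *\<^sub>R u)) = (\<lambda>h. dirD g u (z + s *\<^sub>R u) * h)"
  proof (rule ext)
    fix h show "dirD g (h *\<^sub>R u) (z + s *\<^sub>R u) = dirD g u (z + s *\<^sub>R u) * h"
      using linear_scale[OF linear_dirD[OF assms], of h u] by simp
  qed
  ultimately show ?thesis unfolding has_field_derivative_def by (simp only:)
qed

lemma schwarz:
  fixes f :: "'a::real_normed_vector \<Rightarrow> real"
  assumes U: "open U" "x \<in> U" and sm: "smooth_on U f"
  shows "pd [u, v] f x = pd [v, u] f x"
proof (rule ccontr)
  define A where "A = pd [u, v] f x"
  define B where "B = pd [v, u] f x"
  assume "pd [u, v] f x \<noteq> pd [v, u] f x"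
  then have AB: "A \<noteq> B" unfolding A_def B_def .
  define e where "e = \<bar>A - B\<bar> / 2"
  have e: "e > 0" using AB unfolding e_def by simp
  have dif: "\<And>ws y. y \<in> U \<Longrightarrow> pd ws f differentiable at y"
    using sm unfolding smooth_on_def by blast
  have cA: "isCont (pd [u, v] f) x" using dif[OF U(2)] by (rule differentiable_imp_continuous_within)
  have cB: "isCont (pd [v, u] f) x" using dif[OF U(2)] by (rule differentiable_imp_continuous_within)
  obtain d1 where d1: "d1 > 0" "\<And>y. dist y x < d1 \<Longrightarrow> dist (pd [u, v] f y) A < e"
    using cA e unfolding continuous_at_eps_delta A_def by blast
  obtain d2 where d2: "d2 > 0" "\<And>y. dist y x < d2 \<Longrightarrow> dist (pd [v, u] f y) B < e"
    using cB e unfolding continuous_at_eps_delta B_def by blast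
  obtain d3 where d3: "d3 > 0" "ball x d3 \<subseteq> U"
    using U open_contains_ball by blast
  define d where "d = min d1 (min d2 d3)"
  have d: "d > 0" using d1 d2 d3 unfolding d_def by simp
  define M where "M = norm u + norm v + 1"
  have M: "M > 0" unfolding M_def using norm_ge_zero[of u] norm_ge_zero[of v] by linarith
  define h where "h = d / (2 * M)"
  have h: "h > 0" unfolding h_def using d M by simp
  have hM: "h * (norm u + norm v) < d"
  proof -
    have "h * (norm u + norm v) \<le> h * M" using h unfolding M_def by (intro mult_left_mono) auto
    also have "\<dots> = d / 2" unfolding h_def using M by simp
    finally show ?thesis using d by simp
  qed
  have close: "dist (x + s *\<^sub>R u + t *\<^sub>R v) x < d" if "0 \<le> s" "s \<le> h" "0 \<le> t" "t \<le> h" for s t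
  proof -
    have "dist (x + s *\<^sub>R u + t *\<^sub>R v) x = norm (s *\<^sub>R u + t *\<^sub>R v)" by (simp add: dist_norm)
    also have "\<dots> \<le> s * norm u + t * norm v"
      using that by (metis abs_of_nonneg norm_scaleR norm_triangle_ineq)
    also have "\<dots> \<le> h * norm u + h * norm v" using that by (intro add_mono mult_right_mono) auto
    finally show ?thesis using hM by (simp add: algebra_simps)
  qed
  have inU: "x + s *\<^sub>R u + t *\<^sub>R v \<in> U" if "0 \<le> s" "s \<le> h" "0 \<le> t" "t \<le> h" for s t
    using close[OF that] d3(2) unfolding d_def by (auto simp: dist_commute subset_iff)
  define Dl where "Dl = f (x + h *\<^sub>R u + h *\<^sub>R v) - f (x + h *\<^sub>R u) - f (x + h *\<^sub>R v) + f x"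
  obtain s1 t1 where st1: "0 < s1" "s1 < h" "0 < t1" "t1 < h" "Dl = h * h * pd [v, u] f (x + s1 *\<^sub>R u + t1 *\<^sub>R v)"
  proof -
    define G where "G s = f ((x + h *\<^sub>R v) + s *\<^sub>R u) - f (x + s *\<^sub>R u)" for s
    have dG1: "DERIV G s :> dirD f u ((x + h *\<^sub>R v) + s *\<^sub>R u) - dirD f u (x + s *\<^sub>R u)" if "0 \<le> s" "s \<le> h" for s
      unfolding G_def
    proof (intro DERIV_diff line_deriv)
      show "f differentiable at (x + h *\<^sub>R v + s *\<^sub>R u)"
        using dif[OF inU[of s h], of "[]"] that h by (simp add: algebra_simps)
      show "f differentiable at (x + s *\<^sub>R u)"
        using dif[OF inU[of s 0], of "[]"] that h by (simp add: algebra_simps)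
    qed
    obtain s1 where s1: "0 < s1" "s1 < h"
      "G h - G 0 = (h - 0) * (dirD f u ((x + h *\<^sub>R v) + s1 *\<^sub>R u) - dirD f u (x + s1 *\<^sub>R u))"
      using MVT2[OF h dG1] by blast
    define K where "K t = pd [u] f ((x + s1 *\<^sub>R u) + t *\<^sub>R v)" for t
    have dK1: "DERIV K t :> dirD (pd [u] f) v ((x + s1 *\<^sub>R u) + t *\<^sub>R v)" if "0 \<le> t" "t \<le> h" for t
      unfolding K_def
    proof (intro line_deriv)
      show "pd [u] f differentiable at (x + s1 *\<^sub>R u + t *\<^sub>R v)"
        using dif[OF inU[of s1 t], of "[u]"] that s1 by simp
    qed
    obtain t1 where t1: "0 < t1" "t1 < h"
      "K h - K 0 = (h - 0) * dirD (pd [u] f) v ((x + s1 *\<^sub>R u) + t1 *\<^sub>R v)"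
      using MVT2[OF h dK1] by blast
    have "Dl = G h - G 0" unfolding Dl_def G_def by (simp add: algebra_simps)
    also have "\<dots> = h * (K h - K 0)" using s1(3) unfolding K_def by (simp add: algebra_simps)
    also have "\<dots> = h * h * pd [v, u] f (x + s1 *\<^sub>R u + t1 *\<^sub>R v)" using t1(3) by simp
    finally show ?thesis using that s1 t1 by blast
  qed
  obtain s2 t2 where st2: "0 < s2" "s2 < h" "0 < t2" "t2 < h" "Dl = h * h * pd [u, v] f (x + s2 *\<^sub>R u + t2 *\<^sub>R v)"
  proof -
    define G where "G t = f ((x + h *\<^sub>R u) + t *\<^sub>R v) - f (x + t *\<^sub>R v)" for t
    have dG2: "DERIV G t :> dirD f v ((x + h *\<^sub>R u) + t *\<^sub>R v) - dirD f v (x + t *\<^sub>R v)" if "0 \<le> t" "t \<le> h" for t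
      unfolding G_def
    proof (intro DERIV_diff line_deriv)
      show "f differentiable at (x + h *\<^sub>R u + t *\<^sub>R v)"
        using dif[OF inU[of h t], of "[]"] that h by (simp add: algebra_simps)
      show "f differentiable at (x + t *\<^sub>R v)"
        using dif[OF inU[of 0 t], of "[]"] that h by (simp add: algebra_simps)
    qed
    obtain t2 where t2: "0 < t2" "t2 < h"
      "G h - G 0 = (h - 0) * (dirD f v ((x + h *\<^sub>R u) + t2 *\<^sub>R v) - dirD f v (x + t2 *\<^sub>R v))"
      using MVT2[OF h dG2] by blast
    define K where "K s = pd [v] f ((x + t2 *\<^sub>R v) + s *\<^sub>R u)" for s
    have dK2: "DERIV K s :> dirD (pd [v] f) u ((x + t2 *\<^sub>R v) + s *\<^sub>R u)" if "0 \<le> s" "s \<le> h" for s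
      unfolding K_def
    proof (intro line_deriv)
      show "pd [v] f differentiable at (x + t2 *\<^sub>R v + s *\<^sub>R u)"
        using dif[OF inU[of s t2], of "[v]"] that t2 by (simp add: algebra_simps)
    qed
    obtain s2 where s2: "0 < s2" "s2 < h"
      "K h - K 0 = (h - 0) * dirD (pd [v] f) u ((x + t2 *\<^sub>R v) + s2 *\<^sub>R u)"
      using MVT2[OF h dK2] by blast
    have "Dl = G h - G 0" unfolding Dl_def G_def by (simp add: algebra_simps)
    also have "\<dots> = h * (K h - K 0)" using t2(3) unfolding K_def by (simp add: algebra_simps)
    also have "\<dots> = h * h * pd [u, v] f (x + s2 *\<^sub>R u + t2 *\<^sub>R v)" using s2(3) by (simp add: algebra_simps)
    finally show ?thesis using that s2 t2 by blast
  qed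
  have eq: "pd [v, u] f (x + s1 *\<^sub>R u + t1 *\<^sub>R v) = pd [u, v] f (x + s2 *\<^sub>R u + t2 *\<^sub>R v)"
    using st1(5) st2(5) h by simp
  have "dist (pd [u, v] f (x + s2 *\<^sub>R u + t2 *\<^sub>R v)) A < e"
    using d1(2) close[of s2 t2] st2 unfolding d_def by simp
  moreover have "dist (pd [v, u] f (x + s1 *\<^sub>R u + t1 *\<^sub>R v)) B < e"
    using d2(2) close[of s1 t1] st1 unfolding d_def by simp
  ultimately have "\<bar>A - B\<bar> < 2 * e" using eq unfolding dist_real_def by linarith
  then show False unfolding e_def by simp
qed

lemma cont_K:
  fixes k :: "'a::real_normed_vector \<Rightarrow> real"
  assumes ck: "continuous_on (-{0}) k" and b: "bnd (-q) k" and q: "q > 0" and pq: "p + q > 0"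
  shows "continuous_on ((-{0}) \<times> {0..})
           (\<lambda>z. if snd z = 0 then 0 else snd z powr p * k ((1 / snd z) *\<^sub>R fst z))"
  (is "continuous_on ?S ?K")
  unfolding continuous_on_eq_continuous_within
proof (intro ballI)
  fix z assume z: "z \<in> ?S"
  obtain x s where zxs: "z = (x, s)" by (cases z)
  have x: "x \<noteq> 0" and s: "s \<ge> 0" using z zxs by auto
  show "continuous (at z within ?S) ?K"
  proof (cases "s = 0")
    case False
    then have s0: "s > 0" using s by simp
    let ?F = "\<lambda>z. snd z powr p * k ((1 / snd z) *\<^sub>R fst z)"
    have ckat: "isCont k ((1 / s) *\<^sub>R x)"
      using ck[unfolded continuous_on_eq_continuous_at[OF open_punct]] x s0 by simp
    have c1: "isCont (\<lambda>z. (1 / snd z) *\<^sub>R fst z) z"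
      using s0 zxs by (intro continuous_intros) auto
    have c2: "isCont (\<lambda>z. k ((1 / snd z) *\<^sub>R fst z)) z"
      using continuous_at_compose[OF c1, of k] ckat zxs by (simp add: o_def)
    have c3: "isCont (\<lambda>z. snd z powr p) z"
      using s0 zxs by (intro continuous_intros) auto
    have "isCont ?F z" using c2 c3 by (intro continuous_mult)
    then have cF: "continuous (at z within ?S) ?F" by (rule continuous_at_imp_continuous_at_within)
    show ?thesis
    proof (rule continuous_transform_within[OF cF s0 z])
      fix z' assume "z' \<in> ?S" "dist z' z < s"
      then have "dist (snd z') (snd z) < s" using dist_snd_le[of z' z] by linarith
      then have "snd z' \<noteq> 0" using zxs by (auto simp: dist_real_def)
      then show "?F z' = ?K z'" by simp
    qed
  next
    case True
    obtain C R where CR: "C \<ge> 0" "R > 0" "\<And>y. R \<le> norm y \<Longrightarrow> \<bar>k y\<bar> \<le> C * norm y powr (-q)"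
      using bndE[OF b] by blast
    define a where "a = norm x / 2"
    have a: "a > 0" using x unfolding a_def by simp
    define C' where "C' = C * a powr (-q)"
    have C': "C' \<ge> 0" unfolding C'_def using CR(1) by simp
    have bound: "\<bar>?K z'\<bar> \<le> C' * \<bar>snd z'\<bar> powr (p + q)"
      if z': "z' \<in> ?S" "dist z' z < min a (a / R)" for z'
    proof -
      obtain y t where yt: "z' = (y, t)" by (cases z')
      have t: "t \<ge> 0" using z' yt by auto
      have dy: "dist y x < a" using dist_fst_le[of z' z] z'(2) yt zxs by simp
      have ny: "norm y \<ge> a"
      proof -
        have "norm x \<le> norm y + dist y x" by (metis dist_commute dist_norm norm_triangle_sub add.commute)
        then show ?thesis using dy unfolding a_def by simp
      qed
      have dt: "t < a / R" using dist_snd_le[of z' z] z'(2) yt zxs True by (simp add: dist_real_def) linarith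
      show ?thesis
      proof (cases "t = 0")
        case True
        then show ?thesis using yt C' by simp
      next
        case False
        then have t0: "t > 0" using t by simp
        have "R < a / t" using dt t0 CR(2) by (simp add: field_simps)
        also have "a / t \<le> norm y / t" using ny t0 by (simp add: divide_right_mono)
        also have "norm y / t = norm ((1 / t) *\<^sub>R y)" using t0 by simp
        finally have big: "R \<le> norm ((1 / t) *\<^sub>R y)" by simp
        have "\<bar>k ((1 / t) *\<^sub>R y)\<bar> \<le> C * (norm y / t) powr (-q)"
          using CR(3)[OF big] t0 by simp
        also have "(norm y / t) powr (-q) = norm y powr (-q) * t powr q"
          using t0 ny a by (simp add: powr_divide powr_minus_divide)
        also have "C * (norm y powr (-q) * t powr q) \<le> C * (a powr (-q) * t powr q)"
          using CR(1) a ny q by (intro mult_left_mono mult_right_mono powr_mono2') auto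
        finally have kb: "\<bar>k ((1 / t) *\<^sub>R y)\<bar> \<le> C * (a powr (-q) * t powr q)" .
        have "\<bar>?K z'\<bar> = t powr p * \<bar>k ((1 / t) *\<^sub>R y)\<bar>" using yt t0 by (simp add: abs_mult)
        also have "\<dots> \<le> t powr p * (C * (a powr (-q) * t powr q))"
          using kb by (intro mult_left_mono) auto
        also have "\<dots> = C' * (t powr p * t powr q)" unfolding C'_def by (simp add: mult_ac)
        also have "\<dots> = C' * \<bar>snd z'\<bar> powr (p + q)" using yt t0 by (simp add: powr_add)
        finally show ?thesis .
      qed
    qed
    have ev: "eventually (\<lambda>z'. norm (?K z') \<le> C' * \<bar>snd z'\<bar> powr (p + q)) (at z within ?S)"
      unfolding eventually_at
      using bound a CR(2) by (intro exI[of _ "min a (a / R)"]) auto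
    have lim: "((\<lambda>z'. C' * \<bar>snd z'\<bar> powr (p + q)) \<longlongrightarrow> 0) (at z within ?S)"
    proof -
      have "((\<lambda>z'. \<bar>snd z'\<bar>) \<longlongrightarrow> \<bar>snd z\<bar>) (at z within ?S)"
        by (intro tendsto_intros)
      then have "((\<lambda>z'. \<bar>snd z'\<bar>) \<longlongrightarrow> 0) (at z within ?S)" using zxs True by simp
      then have "((\<lambda>z'. \<bar>snd z'\<bar> powr (p + q)) \<longlongrightarrow> 0 powr (p + q)) (at z within ?S)"
        using pq by (intro tendsto_powr') auto
      then show ?thesis using tendsto_mult_left[of _ 0 _ C'] by simp
    qed
    have "(?K \<longlongrightarrow> 0) (at z within ?S)" by (rule Lim_null_comparison[OF ev lim])
    then show ?thesis unfolding continuous_within using zxs True by simp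
  qed
qed

definition Jop :: "real \<Rightarrow> ('a::real_normed_vector \<Rightarrow> real) \<Rightarrow> 'a \<Rightarrow> real" where
  "Jop c h x = integral {0..1} (\<lambda>s. if s = 0 then 0 else s powr c * h ((1 / s) *\<^sub>R x))"

lemma cont_K_pt:
  fixes k :: "'a::real_normed_vector \<Rightarrow> real"
  assumes ck: "continuous_on (-{0}) k" and b: "bnd (-q) k" and q: "q > 0" and pq: "p + q > 0"
    and x: "x \<noteq> 0"
  shows "continuous_on {0..1} (\<lambda>s. if s = 0 then 0 else s powr p * k ((1 / s) *\<^sub>R x))"
proof -
  have "continuous_on {0..1} (\<lambda>s. (\<lambda>z. if snd z = 0 then 0 else snd z powr p * k ((1 / snd z) *\<^sub>R fst z)) (x, s))"
  proof (rule continuous_on_compose2[OF cont_K[OF ck b q pq]])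
    show "continuous_on {0..1} (\<lambda>s. (x, s))" by (intro continuous_intros)
    show "(\<lambda>s. (x, s)) ` {0..1} \<subseteq> (- {0}) \<times> ({0..})" using x by auto
  qed
  then show ?thesis by (simp cong: if_cong)
qed

lemma decays_cont: "decays m h \<Longrightarrow> continuous_on (-{0}) (pd vs h)"
  by (intro continuous_at_imp_continuous_on ballI differentiable_imp_continuous_within decays_diff) auto

lemma decays_bnd0: "decays m h \<Longrightarrow> bnd (- m) h"
  using decays_bnd[of m h "[]"] by simp

lemma decays_bnd1:
  assumes "decays m h" shows "bnd (- (m + 1)) (pd [w] h)"
proof -
  have "- (m + 1) = - m - real (length [w])" by simp
  then show ?thesis using decays_bnd[OF assms, of "[w]"] by (simp only:)
qed

lemma J_integrable:
  fixes h :: "'a::real_normed_vector \<Rightarrow> real"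
  assumes d: "decays m h" and cm: "c + m > 0" and m: "m > 0" and x: "x \<noteq> 0"
  shows "(\<lambda>s. if s = 0 then 0 else s powr c * h ((1 / s) *\<^sub>R x)) integrable_on {0..1}"
proof -
  have c: "continuous_on (-{0}) h" using decays_cont[OF d, of "[]"] by simp
  show ?thesis using cont_K_pt[OF c decays_bnd0[OF d] m _ x, of c] cm
    by (intro integrable_continuous_interval) (simp add: add.commute)
qed

lemma J_deriv:
  fixes h :: "'a::euclidean_space \<Rightarrow> real"
  assumes d: "decays m h" and cm: "c + m > 0" and m: "m > 0" and x0: "x0 \<noteq> 0"
  shows "(Jop c h has_derivative (\<lambda>w. Jop (c - 1) (pd [w] h) x0)) (at x0)"
proof -
  define U where "U = ball x0 (norm x0 / 2)"
  have U: "open U" "convex U" "x0 \<in> U" using x0 unfolding U_def by auto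
  have U0: "y \<noteq> 0" if "y \<in> U" for y
  proof
    assume "y = 0"
    then show False using that x0 unfolding U_def by (simp add: dist_norm)
  qed
  define f where "f x s = (if s = 0 then 0 else s powr c * h ((1 / s) *\<^sub>R x))" for x s
  define fx where "fx x s = (if s = 0 then 0 else (s powr (c - 1)) *\<^sub>R Blinfun (\<lambda>w. pd [w] h ((1 / s) *\<^sub>R x)))" for x s
  have bl: "bounded_linear (\<lambda>w. pd [w] h y)" if "y \<noteq> 0" for y
    using linear_dirD[OF decays_diff[OF d that, of "[]"]] by (simp add: linear_conv_bounded_linear[symmetric])
  have fxa: "blinfun_apply (fx x s) w = (if s = 0 then 0 else s powr (c - 1) * pd [w] h ((1 / s) *\<^sub>R x))"
    if "x \<noteq> 0" "s \<ge> 0" for x s w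
  proof (cases "s = 0")
    case True
    then show ?thesis unfolding fx_def by simp
  next
    case False
    then have "(1 / s) *\<^sub>R x \<noteq> 0" using that by simp
    then have "blinfun_apply (Blinfun (\<lambda>w. pd [w] h ((1 / s) *\<^sub>R x))) = (\<lambda>w. pd [w] h ((1 / s) *\<^sub>R x))"
      using bounded_linear_Blinfun_apply[OF bl] by blast
    then show ?thesis unfolding fx_def using False by (simp add: blinfun.scaleR_left)
  qed
  have der: "((\<lambda>x. f x s) has_derivative blinfun_apply (fx x s)) (at x within U)"
    if "x \<in> U" "s \<in> cbox 0 1" for x s
  proof (cases "s = 0")
    case True
    have "(\<lambda>x. f x s) = (\<lambda>x. 0)" unfolding f_def using True by simp
    moreover have "blinfun_apply (fx x s) = (\<lambda>x. 0)" unfolding fx_def using True by (simp add: fun_eq_iff)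
    ultimately show ?thesis by simp
  next
    case False
    then have s0: "s > 0" using that by simp
    have y0: "(1 / s) *\<^sub>R x \<noteq> 0" using U0[OF that(1)] s0 by simp
    have dh: "h differentiable at ((1 / s) *\<^sub>R x)" using decays_diff[OF d y0, of "[]"] by simp
    have l: "((\<lambda>x. (1 / s) *\<^sub>R x) has_derivative (\<lambda>w. (1 / s) *\<^sub>R w)) (at x)"
      by (intro derivative_eq_intros) auto
    have "((\<lambda>x. s powr c * h ((1 / s) *\<^sub>R x)) has_derivative
           (\<lambda>w. s powr c * dirD h ((1 / s) *\<^sub>R w) ((1 / s) *\<^sub>R x))) (at x)"
      using has_derivative_compose[OF l has_derivative_dirD[OF dh]] by (intro has_derivative_mult_right) simp
    moreover have "(\<lambda>w. s powr c * dirD h ((1 / s) *\<^sub>R w) ((1 / s) *\<^sub>R x)) = blinfun_apply (fx x s)"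
    proof
      fix w
      have "s powr c * dirD h ((1 / s) *\<^sub>R w) ((1 / s) *\<^sub>R x) = s powr c * (1 / s) * dirD h w ((1 / s) *\<^sub>R x)"
        using linear_scale[OF linear_dirD[OF dh], of "1 / s" w] by simp
      also have "s powr c * (1 / s) = s powr (c - 1)" using s0 by (simp add: powr_diff)
      finally show "s powr c * dirD h ((1 / s) *\<^sub>R w) ((1 / s) *\<^sub>R x) = blinfun_apply (fx x s) w"
        using fxa[OF U0[OF that(1)], of s w] s0 by simp
    qed
    moreover have "(\<lambda>x. f x s) = (\<lambda>x. s powr c * h ((1 / s) *\<^sub>R x))" unfolding f_def using False by simp
    ultimately show ?thesis by (simp add: has_derivative_at_withinI)
  qed
  have int: "f x integrable_on cbox 0 1" if "x \<in> U" for x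
    using J_integrable[OF d cm m U0[OF that]] unfolding f_def by simp
  have cfx: "continuous_on (U \<times> cbox 0 1) (\<lambda>(x, t). fx x t)"
  proof (rule continuous_on_blinfun_componentwise)
    fix i :: 'a assume "i \<in> Basis"
    have c: "continuous_on ((- {0}) \<times> {0..})
       (\<lambda>z. if snd z = 0 then 0 else snd z powr (c - 1) * pd [i] h ((1 / snd z) *\<^sub>R fst z))"
      using cont_K[OF decays_cont[OF d, of "[i]"] decays_bnd1[OF d, of i], of "c - 1"] m cm by simp
    have c': "continuous_on (U \<times> cbox 0 1)
       (\<lambda>z. if snd z = 0 then 0 else snd z powr (c - 1) * pd [i] h ((1 / snd z) *\<^sub>R fst z))"
      by (rule continuous_on_subset[OF c]) (use U0 in auto)
    show "continuous_on (U \<times> cbox 0 1) (\<lambda>z. blinfun_apply ((\<lambda>(x, t). fx x t) z) i)"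
    proof (rule continuous_on_eq[OF c'])
      fix z :: "'a \<times> real" assume "z \<in> U \<times> cbox 0 1"
      then show "(if snd z = 0 then 0 else snd z powr (c - 1) * pd [i] h ((1 / snd z) *\<^sub>R fst z))
            = blinfun_apply ((\<lambda>(x, t). fx x t) z) i"
        using fxa[of "fst z" "snd z" i] U0 by (auto simp: case_prod_unfold)
    qed
  qed
  have L: "((\<lambda>x. integral (cbox 0 1) (f x)) has_derivative blinfun_apply (integral (cbox 0 1) (fx x0))) (at x0 within U)"
    by (rule leibniz_rule[OF der int cfx U(3) U(2)])
  then have L': "((\<lambda>x. integral (cbox 0 1) (f x)) has_derivative blinfun_apply (integral (cbox 0 1) (fx x0))) (at x0)"
    using at_within_open[OF U(3,1)] by simp
  have cfx0: "continuous_on (cbox 0 1) (fx x0)"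
  proof -
    have "continuous_on (cbox 0 1) (\<lambda>t. (\<lambda>(x, t). fx x t) (x0, t))"
      by (rule continuous_on_compose2[OF cfx]) (use U(3) in \<open>auto intro!: continuous_intros\<close>)
    then show ?thesis by simp
  qed
  have ifx: "fx x0 integrable_on cbox 0 1" using integrable_continuous[OF cfx0] .
  have "blinfun_apply (integral (cbox 0 1) (fx x0)) = (\<lambda>w. Jop (c - 1) (pd [w] h) x0)"
  proof
    fix w
    have "blinfun_apply (integral (cbox 0 1) (fx x0)) w = integral (cbox 0 1) (\<lambda>s. blinfun_apply (fx x0 s) w)"
      by (rule blinfun_apply_integral[OF ifx])
    also have "\<dots> = integral {0..1} (\<lambda>s. if s = 0 then 0 else s powr (c - 1) * pd [w] h ((1 / s) *\<^sub>R x0))"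
      unfolding cbox_interval by (rule integral_cong) (use fxa[OF x0] in auto)
    finally show "blinfun_apply (integral (cbox 0 1) (fx x0)) w = Jop (c - 1) (pd [w] h) x0"
      unfolding Jop_def .
  qed
  moreover have "(\<lambda>x. integral (cbox 0 1) (f x)) = Jop c h"
    unfolding Jop_def f_def by (simp add: fun_eq_iff)
  ultimately show ?thesis using L' by simp
qed

lemma J_pd:
  fixes h :: "'a::euclidean_space \<Rightarrow> real"
  assumes d: "decays m h" and cm: "c + m > 0" and m: "m > 0"
  shows "x \<noteq> 0 \<Longrightarrow> pd vs (Jop c h) x = Jop (c - real (length vs)) (pd vs h) x"
proof (induction vs arbitrary: x)
  case Nil
  show ?case by simp
next
  case (Cons v vs)
  let ?k = "real (length vs)"
  have dk: "decays (m + ?k) (pd vs h)" by (rule decays_pd[OF d])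
  have cmk: "(c - ?k) + (m + ?k) > 0" using cm by simp
  have mk: "m + ?k > 0" using m by simp
  have JD: "(Jop (c - ?k) (pd vs h) has_derivative (\<lambda>w. Jop (c - ?k - 1) (pd [w] (pd vs h)) x)) (at x)"
    using J_deriv[OF dk cmk mk Cons.prems] by simp
  have eq: "\<And>y. y \<in> -{0} \<Longrightarrow> pd vs (Jop c h) y = Jop (c - ?k) (pd vs h) y" using Cons.IH by simp
  have "pd (v # vs) (Jop c h) x = dirD (Jop (c - ?k) (pd vs h)) v x"
    using dirD_eq_open[OF open_punct, of x "pd vs (Jop c h)" "Jop (c - ?k) (pd vs h)" v] eq Cons.prems by simp
  also have "\<dots> = Jop (c - ?k - 1) (pd [v] (pd vs h)) x" using dirD_at[OF JD] .
  finally show ?case by (simp add: algebra_simps)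
qed

lemma J_bnd:
  fixes h :: "'a::real_normed_vector \<Rightarrow> real"
  assumes d: "decays m h" and cm: "c + m > 0" and m: "m > 0"
  shows "bnd (- m) (Jop c h)"
proof -
  obtain C R where CR: "C \<ge> 0" "R > 0" "\<And>y. R \<le> norm y \<Longrightarrow> \<bar>h y\<bar> \<le> C * norm y powr (- m)"
    using bndE[OF decays_bnd0[OF d]] by blast
  show ?thesis
  proof (rule bndI[of R _ C])
    fix y :: 'a assume y: "R \<le> norm y"
    then have y0: "y \<noteq> 0" using CR(2) by auto
    have ny: "norm y > 0" using y0 by simp
    let ?I = "\<lambda>s. if s = 0 then 0 else s powr c * h ((1 / s) *\<^sub>R y)"
    have hi: "(?I has_integral Jop c h y) (cbox 0 1)"
      using J_integrable[OF d cm m y0] unfolding Jop_def cbox_interval by (rule integrable_integral)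
    have B: "norm (?I s) \<le> C * norm y powr (- m)" if "s \<in> cbox 0 1" for s
    proof (cases "s = 0")
      case True
      then show ?thesis using CR(1) by simp
    next
      case False
      then have s0: "0 < s" "s \<le> 1" using that by auto
      have big: "R \<le> norm ((1 / s) *\<^sub>R y)"
      proof -
        have "norm y \<le> norm y / s" using s0 ny by (simp add: field_simps)
        then show ?thesis using y s0 by simp
      qed
      have "norm (?I s) = s powr c * \<bar>h ((1 / s) *\<^sub>R y)\<bar>" using False by (simp add: abs_mult)
      also have "\<dots> \<le> s powr c * (C * (norm y / s) powr (- m))"
        using CR(3)[OF big] s0 by (intro mult_left_mono) auto
      also have "(norm y / s) powr (- m) = norm y powr (- m) * s powr m"
        using s0 ny by (simp add: powr_divide powr_minus_divide)
      also have "s powr c * (C * (norm y powr (- m) * s powr m)) = C * norm y powr (- m) * s powr (c + m)"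
        using s0 by (simp add: powr_add mult_ac)
      also have "\<dots> \<le> C * norm y powr (- m) * 1"
        using s0 cm CR(1) by (intro mult_left_mono powr_le1) auto
      finally show ?thesis by simp
    qed
    show "\<bar>Jop c h y\<bar> \<le> C * norm y powr (- m)"
      using has_integral_bound[OF _ hi B] CR(1) by simp
  qed
qed

lemma J_decays:
  fixes h :: "'a::euclidean_space \<Rightarrow> real"
  assumes d: "decays m h" and cm: "c + m > 0" and m: "m > 0"
  shows "decays m (Jop c h)"
  unfolding decays_def smooth_on_def
proof (intro conjI allI ballI)
  fix vs :: "'a list"
  let ?k = "real (length vs)"
  have dk: "decays (m + ?k) (pd vs h)" by (rule decays_pd[OF d])
  have cmk: "(c - ?k) + (m + ?k) > 0" using cm by simp
  have mk: "m + ?k > 0" using m by simp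
  have eq: "\<And>y. y \<in> -{0} \<Longrightarrow> Jop (c - ?k) (pd vs h) y = pd vs (Jop c h) y"
    using J_pd[OF d cm m] by simp
  {
    fix x :: 'a assume x: "x \<in> -{0}"
    show "pd vs (Jop c h) differentiable at x"
    proof (rule diff_eq_open[OF open_punct x eq])
      show "Jop (c - ?k) (pd vs h) differentiable at x"
        using J_deriv[OF dk cmk mk] x differentiableI by blast
    qed
  }
  have "bnd (- (m + ?k)) (Jop (c - ?k) (pd vs h))" by (rule J_bnd[OF dk cmk mk])
  then have "bnd (- (m + ?k)) (pd vs (Jop c h))" by (rule bnd_cong) (use eq in simp)
  then show "bnd (- m - ?k) (pd vs (Jop c h))" by (simp add: algebra_simps)
qed

lemma cscaleR: "(r::real) *\<^sub>R (a::complex) = of_real r * a"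
  by (simp add: scaleR_conv_of_real)

lemma smult_lin: "bounded_linear (\<lambda>z::complex^'n. c *s z)"
proof -
  have "linear (\<lambda>z::complex^'n. c *s z)"
    by (rule linearI) (simp_all add: vec_eq_iff cscaleR algebra_simps)
  then show ?thesis by (simp add: linear_conv_bounded_linear)
qed

lemma cvec_lin: "bounded_linear (\<lambda>c::complex. c *s (z::complex^'n))"
proof -
  have "linear (\<lambda>c::complex. c *s (z::complex^'n))"
    by (rule linearI) (simp_all add: vec_eq_iff cscaleR algebra_simps)
  then show ?thesis by (simp add: linear_conv_bounded_linear)
qed

lemma Av_smult: "(A::complex^'n^'m) *v (c *s z) = c *s (A *v z)"
  by (simp add: vec_eq_iff matrix_vector_mult_def sum_distrib_left mult_ac)

lemma Av_scaleR: "(A::complex^'n^'m) *v (r *\<^sub>R z) = r *\<^sub>R (A *v z)"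
  by (simp add: vec_eq_iff matrix_vector_mult_def cscaleR sum_distrib_left mult_ac)

lemma smult_scaleR: "(c::complex) *s (r *\<^sub>R (z::complex^'n)) = r *\<^sub>R (c *s z)"
  by (simp add: vec_eq_iff cscaleR mult_ac)

lemma scaleR_smult: "(r *\<^sub>R (c::complex)) *s (z::complex^'n) = r *\<^sub>R (c *s z)"
  by (simp add: vec_eq_iff cscaleR mult_ac)

lemma ii_smult: "\<i> *s (\<i> *s (w::complex^'n)) = - w"
  by (simp add: vec_eq_iff)

lemma smult_one: "(1::complex) *s (w::complex^'n) = w"
  by (simp add: vec_eq_iff)

locale gam =
  fixes \<gamma> :: "complex^2 \<Rightarrow> complex^2 \<Rightarrow> real"
  assumes lin: "\<And>x. x \<noteq> 0 \<Longrightarrow> linear (\<gamma> x)"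
    and dec: "\<And>w. decays 3 (\<lambda>y. \<gamma> y w)"
    and rot: "\<And>c x v. cmod c = 1 \<Longrightarrow> x \<noteq> 0 \<Longrightarrow> \<gamma> (c *s x) (c *s v) = \<gamma> x v"
    and t11: "\<And>x u v. x \<noteq> 0 \<Longrightarrow> extd \<gamma> x (Jmul u) (Jmul v) = extd \<gamma> x u v"
begin

definition g where "g z = \<gamma> z (\<i> *s z)"

lemma sm: "smooth_on (-{0}) (\<lambda>y. \<gamma> y w)"
  using decays_smooth[OF dec] .

lemma dif: "x \<noteq> 0 \<Longrightarrow> pd vs (\<lambda>y. \<gamma> y w) differentiable at x"
  using decays_diff[OF dec] .

lemma dif0: "x \<noteq> 0 \<Longrightarrow> (\<lambda>y. \<gamma> y w) differentiable at x"
  using dif[of x "[]"] by simp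

lemma g_decays: "decays 2 g"
proof -
  have l: "bounded_linear (\<lambda>z::complex^2. (\<i> *s z) \<bullet> b)" for b
    using bounded_linear_compose[OF bounded_linear_inner_left[of b] smult_lin[of "\<i>"]] by simp
  have "decays (3 - 1) (\<lambda>z. (\<Sum>b\<in>Basis. ((\<i> *s z) \<bullet> b) * \<gamma> z b))"
    by (intro decays_sum decays_lin[OF l dec])
  then have "decays 2 (\<lambda>z. (\<Sum>b\<in>Basis. ((\<i> *s z) \<bullet> b) * \<gamma> z b))" by simp
  then show ?thesis
  proof (rule decays_cong)
    fix y :: "complex^2" assume "y \<noteq> 0"
    then show "(\<Sum>b\<in>Basis. ((\<i> *s y) \<bullet> b) * \<gamma> y b) = g y"
      using linear_expand[OF lin, of y "\<i> *s y"] unfolding g_def by simp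
  qed
qed

lemma E1:
  assumes z: "z \<noteq> 0"
  shows "dirD (\<lambda>y. \<gamma> y w) (\<i> *s z) z + \<gamma> z (\<i> *s w) = 0"
proof -
  have dc: "((\<lambda>t. cis t) has_derivative (\<lambda>t. t *\<^sub>R (\<i> * cis 0))) (at 0)"
    using has_derivative_cis[OF has_derivative_ident, of 0 UNIV] by simp
  have dp: "((\<lambda>t. cis t *s v) has_derivative (\<lambda>h. h *\<^sub>R (\<i> *s v))) (at 0)" for v
    using bounded_linear.has_derivative[OF cvec_lin dc, of v] by (simp add: scaleR_smult)
  have LC: "((\<lambda>t. \<gamma> (cis t *s z) (cis t *s w)) has_derivative
     (\<lambda>h. dirD (\<lambda>y. \<gamma> y (cis 0 *s w)) (h *\<^sub>R (\<i> *s z)) (cis 0 *s z) + \<gamma> (cis 0 *s z) (h *\<^sub>R (\<i> *s w)))) (at 0)"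
  proof (rule linchain[OF open_punct _ _ _ dp dp])
    show "cis 0 *s z \<in> - {0}" using z by (simp add: smult_one)
    show "\<And>y. y \<in> - {0} \<Longrightarrow> linear (\<gamma> y)" using lin by simp
    show "\<And>v. (\<lambda>y. \<gamma> y v) differentiable at (cis 0 *s z)" using dif0 z by (simp add: smult_one)
  qed
  have "(\<lambda>t. \<gamma> (cis t *s z) (cis t *s w)) = (\<lambda>t. \<gamma> z w)"
    using rot z by simp
  then have LC0: "((\<lambda>t. \<gamma> (cis t *s z) (cis t *s w)) has_derivative (\<lambda>h. 0)) (at 0)"
    by simp
  have "(\<lambda>h. dirD (\<lambda>y. \<gamma> y (cis 0 *s w)) (h *\<^sub>R (\<i> *s z)) (cis 0 *s z) + \<gamma> (cis 0 *s z) (h *\<^sub>R (\<i> *s w))) = (\<lambda>h. 0)"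
    using has_derivative_unique[OF LC LC0] .
  then have "dirD (\<lambda>y. \<gamma> y (cis 0 *s w)) (1 *\<^sub>R (\<i> *s z)) (cis 0 *s z) + \<gamma> (cis 0 *s z) (1 *\<^sub>R (\<i> *s w)) = 0"
    by metis
  then show ?thesis by (simp add: smult_one)
qed

lemma E2:
  assumes z: "z \<noteq> 0"
  shows "dirD g w z = dirD (\<lambda>y. \<gamma> y (\<i> *s z)) w z + \<gamma> z (\<i> *s w)"
proof -
  have "((\<lambda>t. \<gamma> t (\<i> *s t)) has_derivative (\<lambda>h. dirD (\<lambda>y. \<gamma> y (\<i> *s z)) h z + \<gamma> z (\<i> *s h))) (at z)"
  proof (rule linchain[OF open_punct, where p="\<lambda>t. t" and q="\<lambda>t. \<i> *s t", simplified])
    show "z \<noteq> 0" by (rule z)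
    show "\<And>y. y \<noteq> 0 \<Longrightarrow> linear (\<gamma> y)" by (rule lin)
    show "\<And>v. (\<lambda>y. \<gamma> y v) differentiable at z" using dif0 z by simp
    show "((\<lambda>t. t) has_derivative (\<lambda>h. h)) (at z)" by (rule has_derivative_ident)
    show "((\<lambda>t. \<i> *s t) has_derivative (\<lambda>h. \<i> *s h)) (at z)"
      by (rule bounded_linear.has_derivative[OF smult_lin has_derivative_ident])
  qed
  then show ?thesis unfolding g_def by (rule dirD_at)
qed

lemma Phi:
  assumes z: "z \<noteq> 0"
  shows "extd \<gamma> z z w = - pd [\<i> *s w] g z"
proof -
  have a: "extd \<gamma> z z w = dirD (\<lambda>y. \<gamma> y (\<i> *s w)) (\<i> *s z) z - dirD (\<lambda>y. \<gamma> y (\<i> *s z)) (\<i> *s w) z"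
    using t11[OF z, of z w] unfolding extd_def Jmul_def by simp
  have b: "dirD (\<lambda>y. \<gamma> y (\<i> *s w)) (\<i> *s z) z = \<gamma> z w"
    using E1[OF z, of "\<i> *s w"] linear_neg[OF lin[OF z], of w] by (simp add: ii_smult)
  have c: "pd [\<i> *s w] g z = dirD (\<lambda>y. \<gamma> y (\<i> *s z)) (\<i> *s w) z - \<gamma> z w"
    using E2[OF z, of "\<i> *s w"] linear_neg[OF lin[OF z], of w] by (simp add: ii_smult)
  show ?thesis using a b c by simp
qed

lemma E3:
  assumes y: "y \<noteq> 0"
  shows "((\<lambda>z. extd \<gamma> z z v) has_derivative
    (\<lambda>h. (pd [h, y] (\<lambda>x. \<gamma> x v) y + pd [h] (\<lambda>x. \<gamma> x v) y) -
         (pd [h, v] (\<lambda>x. \<gamma> x y) y + pd [v] (\<lambda>x. \<gamma> x h) y))) (at y)"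
proof -
  have G: "((\<lambda>z. dirD (\<lambda>x. \<gamma> x v) z z) has_derivative
     (\<lambda>h. dirD (\<lambda>z. dirD (\<lambda>x. \<gamma> x v) y z) h y + dirD (\<lambda>x. \<gamma> x v) h y)) (at y)"
  proof (rule linchain[OF open_punct, where p="\<lambda>t. t" and q="\<lambda>t. t" and F="\<lambda>z w. dirD (\<lambda>x. \<gamma> x v) w z", simplified])
    show "y \<noteq> 0" by (rule y)
    show "\<And>z. z \<noteq> 0 \<Longrightarrow> linear (\<lambda>w. dirD (\<lambda>x. \<gamma> x v) w z)" using linear_dirD[OF dif0] by blast
    show "\<And>w. (\<lambda>z. dirD (\<lambda>x. \<gamma> x v) w z) differentiable at y" using dif[OF y, of "[_]"] by simp
  qed (rule has_derivative_ident)+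
  have H: "((\<lambda>z. dirD (\<lambda>x. \<gamma> x z) v z) has_derivative
     (\<lambda>h. dirD (\<lambda>z. dirD (\<lambda>x. \<gamma> x y) v z) h y + dirD (\<lambda>x. \<gamma> x h) v y)) (at y)"
  proof (rule linchain[OF open_punct, where p="\<lambda>t. t" and q="\<lambda>t. t" and F="\<lambda>z w. dirD (\<lambda>x. \<gamma> x w) v z", simplified])
    show "y \<noteq> 0" by (rule y)
    show "\<And>z. z \<noteq> 0 \<Longrightarrow> linear (\<lambda>w. dirD (\<lambda>x. \<gamma> x w) v z)"
    proof -
      fix z :: "complex^2" assume z: "z \<noteq> 0"
      show "linear (\<lambda>w. dirD (\<lambda>x. \<gamma> x w) v z)"
        by (rule dirD_linear_arg[OF open_punct]) (use z lin dif0 in auto)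
    qed
    show "\<And>w. (\<lambda>z. dirD (\<lambda>x. \<gamma> x w) v z) differentiable at y" using dif[OF y, of "[v]"] by simp
  qed (rule has_derivative_ident)+
  show ?thesis unfolding extd_def using has_derivative_diff[OF G H] by simp
qed

lemma E4:
  assumes y: "y \<noteq> 0"
  shows "dirD (\<lambda>z. extd \<gamma> z u v) y y = pd [y, u] (\<lambda>x. \<gamma> x v) y - pd [y, v] (\<lambda>x. \<gamma> x u) y"
proof -
  have "((\<lambda>z. extd \<gamma> z u v) has_derivative (\<lambda>h. pd [h, u] (\<lambda>x. \<gamma> x v) y - pd [h, v] (\<lambda>x. \<gamma> x u) y)) (at y)"
    unfolding extd_def
    using has_derivative_diff[OF has_derivative_dirD[OF dif[OF y, of "[u]"]] has_derivative_dirD[OF dif[OF y, of "[v]"]]]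
    by simp
  then show ?thesis by (rule dirD_at)
qed

lemma PI:
  assumes y: "y \<noteq> 0"
  shows "pd [v, \<i> *s u] g y - pd [u, \<i> *s v] g y = 2 * extd \<gamma> y u v + dirD (\<lambda>z. extd \<gamma> z u v) y y"
proof -
  have eqv: "pd [\<i> *s w] g z = - extd \<gamma> z z w" if "z \<in> -{0}" for z w
    using Phi[of z w] that by simp
  have D1: "pd [u, \<i> *s v] g y = - ((pd [u, y] (\<lambda>x. \<gamma> x v) y + pd [u] (\<lambda>x. \<gamma> x v) y) -
         (pd [u, v] (\<lambda>x. \<gamma> x y) y + pd [v] (\<lambda>x. \<gamma> x u) y))"
  proof -
    have "pd [u, \<i> *s v] g y = dirD (\<lambda>z. - extd \<gamma> z z v) u y"
      using dirD_eq_open[OF open_punct, of y "pd [\<i> *s v] g" "\<lambda>z. - extd \<gamma> z z v" u] eqv y by simp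
    also have "\<dots> = - ((pd [u, y] (\<lambda>x. \<gamma> x v) y + pd [u] (\<lambda>x. \<gamma> x v) y) -
         (pd [u, v] (\<lambda>x. \<gamma> x y) y + pd [v] (\<lambda>x. \<gamma> x u) y))"
      using dirD_at[OF has_derivative_minus[OF E3[OF y, of v]]] by simp
    finally show ?thesis .
  qed
  have D2: "pd [v, \<i> *s u] g y = - ((pd [v, y] (\<lambda>x. \<gamma> x u) y + pd [v] (\<lambda>x. \<gamma> x u) y) -
         (pd [v, u] (\<lambda>x. \<gamma> x y) y + pd [u] (\<lambda>x. \<gamma> x v) y))"
  proof -
    have "pd [v, \<i> *s u] g y = dirD (\<lambda>z. - extd \<gamma> z z u) v y"
      using dirD_eq_open[OF open_punct, of y "pd [\<i> *s u] g" "\<lambda>z. - extd \<gamma> z z u" v] eqv y by simp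
    also have "\<dots> = - ((pd [v, y] (\<lambda>x. \<gamma> x u) y + pd [v] (\<lambda>x. \<gamma> x u) y) -
         (pd [v, u] (\<lambda>x. \<gamma> x y) y + pd [u] (\<lambda>x. \<gamma> x v) y))"
      using dirD_at[OF has_derivative_minus[OF E3[OF y, of u]]] by simp
    finally show ?thesis .
  qed
  have S1: "pd [u, y] (\<lambda>x. \<gamma> x v) y = pd [y, u] (\<lambda>x. \<gamma> x v) y"
    using schwarz[OF open_punct _ sm] y by simp
  have S2: "pd [v, y] (\<lambda>x. \<gamma> x u) y = pd [y, v] (\<lambda>x. \<gamma> x u) y"
    using schwarz[OF open_punct _ sm] y by simp
  have S3: "pd [u, v] (\<lambda>x. \<gamma> x y) y = pd [v, u] (\<lambda>x. \<gamma> x y) y"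
    using schwarz[OF open_punct _ sm] y by simp
  have W: "extd \<gamma> y u v = pd [u] (\<lambda>x. \<gamma> x v) y - pd [v] (\<lambda>x. \<gamma> x u) y"
    unfolding extd_def by simp
  show ?thesis using D1 D2 S1 S2 S3 W E4[OF y, of u v] by simp
qed

end

lemma pd_zero: "pd vs (\<lambda>y. 0::real) = (\<lambda>y. 0)"
  by (induction vs) (auto simp: dirD_def)

lemma smooth_zero: "smooth_on U (\<lambda>y. 0::real)"
  unfolding smooth_on_def by (simp add: pd_zero)

lemma pd_scale:
  fixes f :: "'a::real_normed_vector \<Rightarrow> real"
  assumes "open U" "smooth_on U f" "x \<in> U"
  shows "pd vs (\<lambda>y. a * f y) x = a * pd vs f x"
  using pd_lincomb[OF assms(1,2) smooth_zero assms(3), of vs a] by (simp add: pd_zero)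

context gam
begin

definition h2 where "h2 z = -2 * g z"
definition psi where "psi = Jop (-1) h2"

lemma h2_decays: "decays 2 h2"
  using decays_lincomb[OF g_decays decays_zero, of "-2"] unfolding h2_def by simp

lemma psi_decays: "decays 2 psi"
  unfolding psi_def using J_decays[OF h2_decays, of "-1"] by simp

lemma W_decays: "decays 4 (\<lambda>z. extd \<gamma> z u v)"
proof -
  have a: "decays 4 (pd [u] (\<lambda>x. \<gamma> x v))" using decays_pd[OF dec, of "[u]"] by simp
  have b: "decays 4 (pd [v] (\<lambda>x. \<gamma> x u))" using decays_pd[OF dec, of "[v]"] by simp
  show ?thesis
    using decays_lincomb[OF b a, of "-1"] unfolding extd_def by simp
qed

lemma FTC:
  assumes x: "x \<noteq> 0"
  shows "Jop (-3) (\<lambda>y. pd [v, \<i> *s u] g y - pd [u, \<i> *s v] g y) x = - extd \<gamma> x u v"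
proof -
  define W where "W z = extd \<gamma> z u v" for z
  define Q where "Q y = pd [v, \<i> *s u] g y - pd [u, \<i> *s v] g y" for y
  have dW: "decays 4 W" unfolding W_def by (rule W_decays)
  define F where "F s = (if s = 0 then 0 else s powr (-2) * W ((1 / s) *\<^sub>R x))" for s
  define F' where "F' s = (if s = 0 then 0 else - (s powr (-3) * Q ((1 / s) *\<^sub>R x)))" for s
  have cW: "continuous_on (-{0}) W" using decays_cont[OF dW, of "[]"] by simp
  have cont: "continuous_on {0..1} F"
    unfolding F_def using cont_K_pt[OF cW decays_bnd0[OF dW], of "-2" x] x by simp
  have der: "(F has_vector_derivative F' s) (at s)" if s: "s \<in> {0<..<1}" for s
  proof -
    have s0: "s > 0" using s by simp
    define y where "y = (1 / s) *\<^sub>R x"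
    have y0: "y \<noteq> 0" unfolding y_def using s0 x by simp
    have dWy: "(W has_derivative (\<lambda>h. dirD W h y)) (at y)"
      using has_derivative_dirD[OF decays_diff[OF dW y0, of "[]"]] by simp
    have dinv: "((\<lambda>s. inverse s) has_field_derivative - (inverse s ^ 2)) (at s)"
      using DERIV_inverse[of s UNIV] s0 by (simp add: numeral_2_eq_2)
    have d2: "((\<lambda>s. inverse s *\<^sub>R x) has_derivative (\<lambda>h. (h * - (inverse s ^ 2)) *\<^sub>R x)) (at s)"
      using bounded_linear.has_derivative[OF bounded_linear_scaleR_left dinv[unfolded has_field_derivative_def], of x]
      by (simp add: mult.commute)
    have "((\<lambda>s. W (inverse s *\<^sub>R x)) has_derivative (\<lambda>h. dirD W ((h * - (inverse s ^ 2)) *\<^sub>R x) y)) (at s)"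
      using has_derivative_compose[OF d2, of W] dWy unfolding y_def by (simp add: divide_inverse)
    moreover have "(\<lambda>h. dirD W ((h * - (inverse s ^ 2)) *\<^sub>R x) y) = (\<lambda>h. (- (inverse s ^ 2) * dirD W x y) * h)"
    proof
      fix h
      show "dirD W ((h * - (inverse s ^ 2)) *\<^sub>R x) y = (- (inverse s ^ 2) * dirD W x y) * h"
        using linear_scale[OF linear_dirD[OF differentiableI[OF dWy]], of "h * - (inverse s ^ 2)" x] by simp
    qed
    ultimately have D1: "((\<lambda>s. W (inverse s *\<^sub>R x)) has_field_derivative (- (inverse s ^ 2) * dirD W x y)) (at s)"
      unfolding has_field_derivative_def by (simp only:)
    have D0: "((\<lambda>s. s powr (-2)) has_field_derivative (-2) * s powr (-2 - 1)) (at s)"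
      using has_real_derivative_powr[OF s0, of "-2"] .
    have DM: "((\<lambda>s. s powr (-2) * W (inverse s *\<^sub>R x)) has_field_derivative
        (-2) * s powr (-2 - 1) * W (inverse s *\<^sub>R x) + s powr (-2) * (- (inverse s ^ 2) * dirD W x y)) (at s)"
      using DERIV_mult[OF D0 D1] by (simp add: mult_ac)
    have val: "(-2) * s powr (-2 - 1) * W (inverse s *\<^sub>R x) + s powr (-2) * (- (inverse s ^ 2) * dirD W x y) = F' s"
    proof -
      have p2: "s powr (-2) = 1 / s ^ 2" using s0 by (simp add: powr_minus_divide)
      have p3: "s powr (-2 - 1) = 1 / s ^ 3" using s0 by (simp add: powr_minus_divide)
      have p3': "s powr (-3) = 1 / s ^ 3" using s0 by (simp add: powr_minus_divide)
      have PIy: "Q y = 2 * W y + dirD W y y" unfolding Q_def W_def using PI[OF y0] .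
      have lin: "dirD W y y = (1 / s) * dirD W x y"
        using linear_scale[OF linear_dirD[OF differentiableI[OF dWy]], of "1 / s" x] unfolding y_def by simp
      have e: "F' s = - (1 / s ^ 3 * (2 * W y + (1 / s) * dirD W x y))"
        unfolding F'_def using s0 PIy lin p3' y_def by simp
      have wi: "W (inverse s *\<^sub>R x) = W y" unfolding y_def by (simp add: divide_inverse)
      show ?thesis unfolding p2 p3 e wi using s0 by (simp add: field_simps power_eq_if)
    qed
    have "(F has_field_derivative F' s) (at s)"
    proof (rule has_field_derivative_transform_within_open[OF DM[unfolded val] _ _])
      show "open {0<..<(2::real)}" by simp
      show "s \<in> {0<..<2}" using s by simp
      fix z :: real assume "z \<in> {0<..<2}"
      then show "z powr (-2) * W (inverse z *\<^sub>R x) = F z" unfolding F_def by (simp add: divide_inverse)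
    qed
    then show ?thesis using has_real_derivative_iff_has_vector_derivative by blast
  qed
  have "(F' has_integral (F 1 - F 0)) {0..1}"
    by (rule fundamental_theorem_of_calculus_interior[OF _ cont der]) simp
  then have "integral {0..1} F' = W x" unfolding F_def by (simp add: integral_unique)
  moreover have "F' = (\<lambda>s. - (if s = 0 then 0 else s powr (-3) * Q ((1 / s) *\<^sub>R x)))"
    unfolding F'_def by auto
  ultimately have "- integral {0..1} (\<lambda>s. if s = 0 then 0 else s powr (-3) * Q ((1 / s) *\<^sub>R x)) = W x"
    by simp
  then show ?thesis unfolding Jop_def Q_def W_def by simp
qed

end

context gam
begin

lemma main_eq:
  assumes x: "x \<noteq> 0"
  shows "complex_of_real (extd \<gamma> x u v) = i_ddbar psi x u v"
proof -
  have dpsi: "\<And>vs y. y \<noteq> 0 \<Longrightarrow> pd vs psi differentiable at y"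
    using decays_diff[OF psi_decays] by blast
  have DB: "dirD (\<lambda>y. dbar psi y w) h x =
      (complex_of_real (pd [h, w] psi x) + \<i> * complex_of_real (pd [h, \<i> *s w] psi x)) / 2" for w h
  proof -
    have Da: "((\<lambda>y. dirD psi w y) has_derivative (\<lambda>h. pd [h, w] psi x)) (at x)"
      using has_derivative_dirD[OF dpsi[OF x, of "[w]"]] by simp
    have Db: "((\<lambda>y. dirD psi (\<i> *s w) y) has_derivative (\<lambda>h. pd [h, \<i> *s w] psi x)) (at x)"
      using has_derivative_dirD[OF dpsi[OF x, of "[\<i> *s w]"]] by simp
    have S: "((\<lambda>y. complex_of_real (dirD psi w y) + \<i> * complex_of_real (dirD psi (\<i> *s w) y)) has_derivative
       (\<lambda>h. complex_of_real (pd [h, w] psi x) + \<i> * complex_of_real (pd [h, \<i> *s w] psi x))) (at x)"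
      by (intro has_derivative_add has_derivative_mult_right has_derivative_of_real Da Db)
    have "((\<lambda>y. dbar psi y w) has_derivative
       (\<lambda>h. (complex_of_real (pd [h, w] psi x) + \<i> * complex_of_real (pd [h, \<i> *s w] psi x)) / 2)) (at x)"
      unfolding dbar_def Jmul_def
      using bounded_linear.has_derivative[OF bounded_linear_divide[of "2::complex"] S] by simp
    then show ?thesis by (rule dirD_at)
  qed
  define a where "a = pd [u, v] psi x"
  define b where "b = pd [u, \<i> *s v] psi x"
  define d where "d = pd [v, \<i> *s u] psi x"
  have ac: "pd [v, u] psi x = a" unfolding a_def
    using schwarz[OF open_punct _ decays_smooth[OF psi_decays]] x by simp
  have ip: "i_ddbar psi x u v = \<i> * ((complex_of_real a + \<i> * complex_of_real b) / 2 -
                                      (complex_of_real a + \<i> * complex_of_real d) / 2)"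
    unfolding i_ddbar_def extd_def DB a_def b_def d_def using ac a_def by simp
  let ?Q = "\<lambda>y. pd [v, \<i> *s u] g y - pd [u, \<i> *s v] g y"
  have sg: "smooth_on (-{0}) g" using decays_smooth[OF g_decays] .
  have h2eq: "h2 = (\<lambda>z. -2 * g z)" unfolding h2_def by (simp add: fun_eq_iff)
  have pdh2: "pd vs h2 z = -2 * pd vs g z" if "z \<noteq> 0" for vs z
    unfolding h2eq using pd_scale[OF open_punct sg, of z vs "-2"] that by simp
  have Jd: "d = Jop (-3) (pd [v, \<i> *s u] h2) x"
    unfolding d_def psi_def using J_pd[OF h2_decays, of "-1" x "[v, \<i> *s u]"] x by simp
  have Jb: "b = Jop (-3) (pd [u, \<i> *s v] h2) x"
    unfolding b_def psi_def using J_pd[OF h2_decays, of "-1" x "[u, \<i> *s v]"] x by simp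
  have int: "(\<lambda>s. if s = 0 then 0 else s powr (-3) * pd vs h2 ((1 / s) *\<^sub>R x)) integrable_on {0..1}"
    if "length vs = 2" for vs
    using J_integrable[OF decays_pd[OF h2_decays, of vs], of "-3" x] that x by simp
  have "d - b = integral {0..1} (\<lambda>s. (if s = 0 then 0 else s powr (-3) * pd [v, \<i> *s u] h2 ((1 / s) *\<^sub>R x))
                 - (if s = 0 then 0 else s powr (-3) * pd [u, \<i> *s v] h2 ((1 / s) *\<^sub>R x)))"
    unfolding Jd Jb Jop_def by (rule integral_diff[symmetric]) (use int in auto)
  also have "\<dots> = integral {0..1} (\<lambda>s. -2 * (if s = 0 then 0 else s powr (-3) * ?Q ((1 / s) *\<^sub>R x)))"
  proof (rule integral_cong)
    fix s :: real assume "s \<in> {0..1}"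
    show "(if s = 0 then 0 else s powr (-3) * pd [v, \<i> *s u] h2 ((1 / s) *\<^sub>R x))
                 - (if s = 0 then 0 else s powr (-3) * pd [u, \<i> *s v] h2 ((1 / s) *\<^sub>R x))
          = -2 * (if s = 0 then 0 else s powr (-3) * ?Q ((1 / s) *\<^sub>R x))"
    proof (cases "s = 0")
      case True
      then show ?thesis by simp
    next
      case False
      then have y0: "(1 / s) *\<^sub>R x \<noteq> 0" using x by simp
      show ?thesis using pdh2[OF y0, of "[v, \<i> *s u]"] pdh2[OF y0, of "[u, \<i> *s v]"] False
        by (simp add: algebra_simps)
    qed
  qed
  also have "\<dots> = -2 * Jop (-3) ?Q x" unfolding Jop_def by simp
  also have "\<dots> = 2 * extd \<gamma> x u v" using FTC[OF x] by simp
  finally have db: "d = b + 2 * extd \<gamma> x u v" by simp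
  show ?thesis unfolding ip db by (simp add: complex_eq_iff field_simps)
qed

lemma psi_A:
  assumes A: "\<And>x v. x \<noteq> 0 \<Longrightarrow> \<gamma> (A *v x) (A *v v) = \<gamma> x v" and x: "x \<noteq> 0"
  shows "psi (A *v x) = psi x"
proof -
  have gA: "g (A *v z) = g z" if "z \<noteq> 0" for z
    unfolding g_def using A[OF that, of "\<i> *s z"] by (simp add: Av_smult)
  have "(\<lambda>s. if s = 0 then 0 else s powr (-1) * h2 ((1 / s) *\<^sub>R (A *v x)))
      = (\<lambda>s. if s = 0 then 0 else s powr (-1) * h2 ((1 / s) *\<^sub>R x))"
  proof
    fix s :: real
    show "(if s = 0 then 0 else s powr (-1) * h2 ((1 / s) *\<^sub>R (A *v x)))
      = (if s = 0 then 0 else s powr (-1) * h2 ((1 / s) *\<^sub>R x))"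
      using gA[of "(1 / s) *\<^sub>R x"] x unfolding h2_def by (simp add: Av_scaleR[symmetric])
  qed
  then show ?thesis unfolding psi_def Jop_def by simp
qed

lemma psi_c:
  assumes c: "cmod c = 1" and x: "x \<noteq> 0"
  shows "psi (c *s x) = psi x"
proof -
  have gc: "g (c *s z) = g z" if "z \<noteq> 0" for z
  proof -
    show ?thesis unfolding g_def using rot[OF c that, of "\<i> *s z"] by (simp add: mult.commute)
  qed
  have "(\<lambda>s. if s = 0 then 0 else s powr (-1) * h2 ((1 / s) *\<^sub>R (c *s x)))
      = (\<lambda>s. if s = 0 then 0 else s powr (-1) * h2 ((1 / s) *\<^sub>R x))"
  proof
    fix s :: real
    show "(if s = 0 then 0 else s powr (-1) * h2 ((1 / s) *\<^sub>R (c *s x)))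
      = (if s = 0 then 0 else s powr (-1) * h2 ((1 / s) *\<^sub>R x))"
      using gc[of "(1 / s) *\<^sub>R x"] x unfolding h2_def by (simp add: smult_scaleR[symmetric])
  qed
  then show ?thesis unfolding psi_def Jop_def by simp
qed

end

theorem proposition4p3:
  fixes \<Gamma> :: "(complex^2^2) set"
    and \<gamma> :: "complex^2 \<Rightarrow> complex^2 \<Rightarrow> real"
  assumes "finite \<Gamma>" and "\<Gamma> \<subseteq> SU2" and "mat 1 \<in> \<Gamma>"
    and "\<forall>A\<in>\<Gamma>. \<forall>B\<in>\<Gamma>. A ** B \<in> \<Gamma>"
    and "\<forall>A\<in>\<Gamma>. \<exists>B\<in>\<Gamma>. A ** B = mat 1"
    and "smooth_1form_on (- {0}) \<gamma>"
    and "\<forall>A\<in>\<Gamma>. \<forall>x v. x \<noteq> 0 \<longrightarrow> \<gamma> (A *v x) (A *v v) = \<gamma> x v"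
    and "\<forall>c x v. cmod c = 1 \<longrightarrow> x \<noteq> 0 \<longrightarrow> \<gamma> (c *s x) (c *s v) = \<gamma> x v"
    and "type11_on (- {0}) (extd \<gamma>)"
    and "\<forall>w vs. (\<lambda>x. pd vs (\<lambda>y. \<gamma> y w) x)
                 \<in> O[at_infinity](\<lambda>x. norm x powr (- 3 - real (length vs)))"
  shows "\<exists>\<psi> :: complex^2 \<Rightarrow> real.
           smooth_on (- {0}) \<psi>
         \<and> (\<forall>A\<in>\<Gamma>. \<forall>x. x \<noteq> 0 \<longrightarrow> \<psi> (A *v x) = \<psi> x)
         \<and> (\<forall>c x. cmod c = 1 \<longrightarrow> x \<noteq> 0 \<longrightarrow> \<psi> (c *s x) = \<psi> x)
         \<and> (\<forall>x u v. x \<noteq> 0 \<longrightarrow> complex_of_real (extd \<gamma> x u v) = i_ddbar \<psi> x u v)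
         \<and> (\<forall>vs. (\<lambda>x. pd vs \<psi> x) \<in> O[at_infinity](\<lambda>x. norm x powr (- 2 - real (length vs))))"
proof -
  have sm1: "\<forall>x\<in>-{0}. linear (\<gamma> x)" "\<forall>v. smooth_on (-{0}) (\<lambda>x. \<gamma> x v)"
    using assms(6) unfolding smooth_1form_on_def by auto
  have G1: "\<And>x. x \<noteq> 0 \<Longrightarrow> linear (\<gamma> x)" using sm1(1) by simp
  have G2: "\<And>w. decays 3 (\<lambda>y. \<gamma> y w)"
    unfolding decays_def using sm1(2) assms(10) by (simp add: bnd_bigo)
  have G3: "\<And>c x v. cmod c = 1 \<Longrightarrow> x \<noteq> 0 \<Longrightarrow> \<gamma> (c *s x) (c *s v) = \<gamma> x v"
    using assms(8) by blast
  have G4: "\<And>x u v. x \<noteq> 0 \<Longrightarrow> extd \<gamma> x (Jmul u) (Jmul v) = extd \<gamma> x u v"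
    using assms(9) unfolding type11_on_def by simp
  have G: "gam \<gamma>" unfolding gam_def using G1 G2 G3 G4 by blast
  interpret gam \<gamma> by (rule G)
  show ?thesis
  proof (intro exI[of _ psi] conjI allI ballI impI)
    show "smooth_on (- {0}) psi" using decays_smooth[OF psi_decays] .
    show "\<And>A x. A \<in> \<Gamma> \<Longrightarrow> x \<noteq> 0 \<Longrightarrow> psi (A *v x) = psi x"
      using psi_A assms(7) by blast
    show "\<And>c x. cmod c = 1 \<Longrightarrow> x \<noteq> 0 \<Longrightarrow> psi (c *s x) = psi x"
      using psi_c by blast
    show "\<And>x u v. x \<noteq> 0 \<Longrightarrow> complex_of_real (extd \<gamma> x u v) = i_ddbar psi x u v"
      using main_eq by blast
    show "\<And>vs. pd vs psi \<in> O[at_infinity](\<lambda>x. norm x powr (- 2 - real (length vs)))"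
      using decays_bnd[OF psi_decays] by (simp add: bnd_bigo)
  qed
qed


end
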